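(* Let $S,T,Q\ge1$ be integers. Consider a separable ARMA layer with moving-average kernel $W$ (for each pair $(t,s)$ a finitely supported real 2D filter $W_{t,s}$) and, for each output channel $t\in\{1,\dots,T\}$ and each $q\in\{1,\dots,Q\}$, length-3 real filters $f^{q}_{\cdot,t}=(f^{q}_{-1,t},f^{q}_{0,t},f^{q}_{1,t})$ and $g^{q}_{\cdot,t}=(g^{q}_{-1,t},g^{q}_{0,t},g^{q}_{1,t})$, whose input $X=(X_s)_{s=1}^S$ and output $Y=(Y_t)_{t=1}^T$ are related by $$\big(f^{1}_{\cdot,t}*\cdots*f^{Q}_{\cdot,t}\big)\otimes\big(g^{1}_{\cdot,t}*\cdots*g^{Q}_{\cdot,t}\big) * Y_t=\sum_{s=1}^{S}W_{t,s}*X_s\qquad(t=1,\dots,T).$$ If $$\big|f^{q}_{-1,t}+f^{q}_{1,t}\big|<f^{q}_{0,t}\quad\text{and}\quad \big|g^{q}_{-1,t}+g^{q}_{1,t}\big|<g^{q}_{0,t}\qquad\text{for all } q\in\{1,\dots,Q\},\ t\in\{1,\dots,T\},$$ then the layer is (BIBO) stable.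
   Context: Signals are real arrays indexed by $\mathbb{Z}^2$ (2D) or $\mathbb{Z}$ (1D); $*$ denotes convolution (1D filters convolved with each other give 1D filters), and for 1D filters $u,v$, $u\otimes v$ is the 2D filter $(u\otimes v)_{p_1,p_2}=u_{p_1}v_{p_2}$. A length-3 filter $f$ has entries $f_{-1},f_0,f_1$ at positions $-1,0,1$. A linear model $y=h*x$ is BIBO stable if for every input $x$ with $\sup_i|x_i|<\infty$ the output satisfies $\sup_i|y_i|<\infty$. The autoregressive relation $A_t*Y_t=Z_t$ (with $A_t$ the separable filter above and $Z_t=\sum_s W_{t,s}*X_s$) is realized as $Y_t=H_t*Z_t$ with $H_t$ a convolution inverse of $A_t$ ($H_t*A_t=\delta$); the layer is called stable if such inverses can be chosen so that the resulting map $X\mapsto Y$ sends bounded inputs to bounded outputs. *)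

theory Defs
  imports "HOL-Analysis.Analysis"
begin

type_synonym sig1 = "int \<Rightarrow> real"
type_synonym sig2 = "int \<times> int \<Rightarrow> real"

definition conv1 :: "sig1 \<Rightarrow> sig1 \<Rightarrow> sig1" where
  "conv1 u v = (\<lambda>n. \<Sum>\<^sub>\<infinity>k\<in>UNIV. u k * v (n - k))"

definition shift2 :: "int \<times> int \<Rightarrow> int \<times> int \<Rightarrow> int \<times> int" where
  "shift2 p k = (fst p - fst k, snd p - snd k)"

definition conv2 :: "sig2 \<Rightarrow> sig2 \<Rightarrow> sig2" where
  "conv2 a b = (\<lambda>p. \<Sum>\<^sub>\<infinity>k\<in>UNIV. a k * b (shift2 p k))"

definition delta1 :: sig1 where "delta1 = (\<lambda>n. if n = 0 then 1 else 0)"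
definition delta2 :: sig2 where "delta2 = (\<lambda>p. if p = (0,0) then 1 else 0)"

definition conv1_list :: "sig1 list \<Rightarrow> sig1" where
  "conv1_list us = foldr conv1 us delta1"

definition tensor :: "sig1 \<Rightarrow> sig1 \<Rightarrow> sig2" where
  "tensor u v = (\<lambda>p. u (fst p) * v (snd p))"

definition bounded_sig2 :: "sig2 \<Rightarrow> bool" where
  "bounded_sig2 x \<longleftrightarrow> (\<exists>B. \<forall>p. \<bar>x p\<bar> \<le> B)"

definition finite_support2 :: "sig2 \<Rightarrow> bool" where
  "finite_support2 w \<longleftrightarrow> finite {p. w p \<noteq> 0}"

definition len3 :: "sig1 \<Rightarrow> bool" where
  "len3 u \<longleftrightarrow> (\<forall>n. n \<notin> {-1,0,1} \<longrightarrow> u n = 0)"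

definition AR_filter :: "nat \<Rightarrow> (nat \<Rightarrow> nat \<Rightarrow> sig1) \<Rightarrow> (nat \<Rightarrow> nat \<Rightarrow> sig1) \<Rightarrow> nat \<Rightarrow> sig2" where
  "AR_filter Q f g t = tensor (conv1_list (map (\<lambda>q. f q t) [1..<Q+1]))
                              (conv1_list (map (\<lambda>q. g q t) [1..<Q+1]))"

definition MA_part :: "nat \<Rightarrow> (nat \<Rightarrow> nat \<Rightarrow> sig2) \<Rightarrow> (nat \<Rightarrow> sig2) \<Rightarrow> nat \<Rightarrow> sig2" where
  "MA_part S W X t = (\<lambda>p. \<Sum>s = 1..S. conv2 (W t s) (X s) p)"

text \<open>Stability: convolution inverses H_t of the AR filters can be chosen such that
  for every bounded input X, the outputs Y_t = H_t * Z_t are well defined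
  (the defining sums converge absolutely) and bounded.\<close>
definition ARMA_stable :: "nat \<Rightarrow> nat \<Rightarrow> nat \<Rightarrow> (nat \<Rightarrow> nat \<Rightarrow> sig2)
    \<Rightarrow> (nat \<Rightarrow> nat \<Rightarrow> sig1) \<Rightarrow> (nat \<Rightarrow> nat \<Rightarrow> sig1) \<Rightarrow> bool" where
  "ARMA_stable S T Q W f g \<longleftrightarrow>
     (\<exists>H :: nat \<Rightarrow> sig2.
        (\<forall>t\<in>{1..T}. conv2 (H t) (AR_filter Q f g t) = delta2) \<and>
        (\<forall>X :: nat \<Rightarrow> sig2. (\<forall>s\<in>{1..S}. bounded_sig2 (X s)) \<longrightarrow>
           (\<forall>t\<in>{1..T}.
              (\<forall>p. (\<lambda>k. H t k * MA_part S W X t (shift2 p k)) summable_on UNIV) \<and>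
              bounded_sig2 (conv2 (H t) (MA_part S W X t)))))"

end

theory Submission
  imports Defs
begin

definition l1 :: "sig1 \<Rightarrow> bool" where "l1 h \<longleftrightarrow> h summable_on UNIV"
definition fs :: "sig1 \<Rightarrow> bool" where "fs a \<longleftrightarrow> finite {n. a n \<noteq> 0}"

lemma infsum_fin_supp:
  fixes f :: "'a \<Rightarrow> real"
  assumes "finite S" "\<And>k. k \<notin> S \<Longrightarrow> f k = 0"
  shows "infsum f UNIV = sum f S"
proof -
  have "infsum f UNIV = infsum f S"
    by (rule infsum_cong_neutral) (use assms in auto)
  then show ?thesis using assms by simp
qed

lemma summable_fin_supp:
  fixes f :: "'a \<Rightarrow> real"
  assumes "finite S" "\<And>k. k \<notin> S \<Longrightarrow> f k = 0"
  shows "f summable_on UNIV"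
proof -
  have "f summable_on S" using assms by simp
  then show ?thesis
    by (subst summable_on_cong_neutral[of S UNIV f f]) (use assms in auto)
qed

lemma conv1_comm: "conv1 u v = conv1 v u"
proof
  fix n
  show "conv1 u v n = conv1 v u n"
    unfolding conv1_def
    by (rule infsum_reindex_bij_witness[where i="\<lambda>k. n - k" and j="\<lambda>k. n - k"]) auto
qed

lemma conv1_fs:
  assumes "finite A" "\<And>j. j \<notin> A \<Longrightarrow> a j = 0"
  shows "conv1 x a n = (\<Sum>j\<in>A. x (n - j) * a j)"
proof -
  have "conv1 x a n = conv1 a x n" by (simp add: conv1_comm)
  also have "\<dots> = (\<Sum>j\<in>A. a j * x (n - j))"
    unfolding conv1_def by (rule infsum_fin_supp) (use assms in auto)
  finally show ?thesis by (simp add: mult.commute)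
qed

lemma mult_bounded:
  fixes f g :: "'a \<Rightarrow> real"
  assumes "f summable_on A" "\<And>x. x \<in> A \<Longrightarrow> \<bar>g x\<bar> \<le> B"
  shows "(\<lambda>x. f x * g x) summable_on A"
    and "\<bar>infsum (\<lambda>x. f x * g x) A\<bar> \<le> B * infsum (\<lambda>x. \<bar>f x\<bar>) A"
proof -
  have fa: "(\<lambda>x. \<bar>f x\<bar>) summable_on A" using assms(1) summable_on_iff_abs_summable_on_real by auto
  have fb: "(\<lambda>x. B * \<bar>f x\<bar>) summable_on A" using fa by (rule summable_on_cmult_right)
  have le: "\<bar>f x * g x\<bar> \<le> B * \<bar>f x\<bar>" if "x \<in> A" for x
    using mult_left_mono[OF assms(2)[OF that] abs_ge_zero[of "f x"]] by (simp add: abs_mult mult.commute)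
  have "(\<lambda>x. norm (f x * g x)) summable_on A"
    by (rule Infinite_Sum.abs_summable_on_comparison_test'[OF fb]) (use le in auto)
  then show s: "(\<lambda>x. f x * g x) summable_on A"
    using summable_on_iff_abs_summable_on_real by blast
  have "norm (infsum (\<lambda>x. f x * g x) A) \<le> infsum (\<lambda>x. B * \<bar>f x\<bar>) A"
    by (rule norm_infsum_le[OF has_sum_infsum[OF s] has_sum_infsum[OF fb]]) (use le in auto)
  also have "\<dots> = B * infsum (\<lambda>x. \<bar>f x\<bar>) A" by (rule infsum_cmult_right) (use fa in auto)
  finally show "\<bar>infsum (\<lambda>x. f x * g x) A\<bar> \<le> B * infsum (\<lambda>x. \<bar>f x\<bar>) A" by simp
qed

lemma infsum_sum_fin:
  fixes f :: "'b \<Rightarrow> 'a \<Rightarrow> real"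
  assumes "finite J" "\<And>j. j \<in> J \<Longrightarrow> f j summable_on A"
  shows "(\<lambda>k. \<Sum>j\<in>J. f j k) summable_on A \<and> infsum (\<lambda>k. \<Sum>j\<in>J. f j k) A = (\<Sum>j\<in>J. infsum (f j) A)"
  using assms
proof (induction J rule: finite_induct)
  case empty
  then show ?case by simp
next
  case (insert x F)
  then have s1: "f x summable_on A" and s2: "(\<lambda>k. \<Sum>j\<in>F. f j k) summable_on A"
    and e: "infsum (\<lambda>k. \<Sum>j\<in>F. f j k) A = (\<Sum>j\<in>F. infsum (f j) A)" by auto
  have "(\<lambda>k. f x k + (\<Sum>j\<in>F. f j k)) summable_on A" by (rule summable_on_add[OF s1 s2])
  moreover have "infsum (\<lambda>k. f x k + (\<Sum>j\<in>F. f j k)) A = infsum (f x) A + infsum (\<lambda>k. \<Sum>j\<in>F. f j k) A"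
    by (rule infsum_add[OF s1 s2])
  ultimately show ?case using insert e by simp
qed

lemma prod_summable:
  fixes f :: "'a \<Rightarrow> real" and g :: "'b \<Rightarrow> real"
  assumes "f summable_on A" "g summable_on B"
  shows "(\<lambda>(x,y). f x * g y) summable_on A \<times> B"
    and "infsum (\<lambda>(x,y). f x * g y) (A \<times> B) = infsum f A * infsum g B"
proof -
  have fa: "(\<lambda>x. \<bar>f x\<bar>) summable_on A" using assms(1) summable_on_iff_abs_summable_on_real by auto
  have ga: "(\<lambda>x. \<bar>g x\<bar>) summable_on B" using assms(2) summable_on_iff_abs_summable_on_real by auto
  have "Infinite_Sum.abs_summable_on (\<lambda>(x,y). f x * g y) (Sigma A (\<lambda>_. B))"
  proof (rule Infinite_Sum.abs_summable_on_Sigma_iff[THEN iffD2], intro conjI ballI)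
    fix x assume "x \<in> A"
    show "(\<lambda>y. norm ((\<lambda>(x,y). f x * g y) (x, y))) summable_on B"
      using summable_on_cmult_right[OF ga, of "\<bar>f x\<bar>"] by (simp add: abs_mult)
  next
    have e: "norm (infsum (\<lambda>y. norm ((\<lambda>(x,y). f x * g y) (x, y))) B) = norm (\<bar>f x\<bar> * infsum (\<lambda>y. \<bar>g y\<bar>) B)" for x
      by (simp add: abs_mult infsum_cmult_right[OF ga])
    have "(\<lambda>x. norm (\<bar>f x\<bar> * infsum (\<lambda>y. \<bar>g y\<bar>) B)) summable_on A"
      using summable_on_cmult_left[OF fa, of "infsum (\<lambda>y. \<bar>g y\<bar>) B"]
      by (simp add: abs_mult infsum_nonneg)
    then show "(\<lambda>x. norm (infsum (\<lambda>y. norm ((\<lambda>(x,y). f x * g y) (x, y))) B)) summable_on A"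
      by (subst summable_on_cong[OF e]) 
  qed
  then show s: "(\<lambda>(x,y). f x * g y) summable_on A \<times> B"
    using summable_on_iff_abs_summable_on_real by blast
  have "infsum (\<lambda>(x,y). f x * g y) (A \<times> B) = infsum (\<lambda>x. infsum (\<lambda>y. f x * g y) B) A"
    using infsum_Sigma'_banach[of "\<lambda>x y. f x * g y" A "\<lambda>_. B"] s by simp
  also have "\<dots> = infsum (\<lambda>x. f x * infsum g B) A"
    by (simp add: infsum_cmult_right[OF assms(2)])
  also have "\<dots> = infsum f A * infsum g B"
    by (simp add: infsum_cmult_left[OF assms(1)])
  finally show "infsum (\<lambda>(x,y). f x * g y) (A \<times> B) = infsum f A * infsum g B" .
qed


lemma l1_abs: "l1 h \<Longrightarrow> (\<lambda>k. \<bar>h k\<bar>) summable_on UNIV"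
  unfolding l1_def using summable_on_iff_abs_summable_on_real by auto

lemma l1_bound: assumes "l1 h" shows "\<bar>h n\<bar> \<le> infsum (\<lambda>k. \<bar>h k\<bar>) UNIV"
proof -
  have "sum (\<lambda>k. \<bar>h k\<bar>) {n} \<le> infsum (\<lambda>k. \<bar>h k\<bar>) UNIV"
    by (rule finite_sum_le_infsum) (use l1_abs[OF assms] in auto)
  then show ?thesis by simp
qed

lemma fs_l1: "fs a \<Longrightarrow> l1 a"
  unfolding fs_def l1_def by (rule summable_fin_supp[of "{n. a n \<noteq> 0}"]) auto

lemma conv_summ: assumes "l1 h" "l1 g" shows "(\<lambda>k. h k * g (n - k)) summable_on UNIV"
  using mult_bounded(1)[of h UNIV "\<lambda>k. g (n - k)" "infsum (\<lambda>k. \<bar>g k\<bar>) UNIV"] assms l1_bound[OF assms(2)]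
  unfolding l1_def by auto

lemma l1_conv: assumes "l1 h" "l1 g" shows "l1 (conv1 h g)"
proof -
  have G: "(\<lambda>(k,m). h k * g m) summable_on UNIV \<times> UNIV"
    using prod_summable(1)[of h UNIV g UNIV] assms unfolding l1_def by auto
  have F: "(\<lambda>(n,k). h k * g (n - k)) summable_on (UNIV :: (int \<times> int) set)"
    using G by (subst summable_on_reindex_bij_witness[where j="\<lambda>(n,k). (k, n - k)" and i="\<lambda>(k,m). (k+m, k)" and T=UNIV and h="\<lambda>(k,m). h k * g m"]) auto
  have "(\<lambda>n. infsum (\<lambda>k. h k * g (n - k)) UNIV) summable_on UNIV"
    using summable_on_Sigma_banach[of "\<lambda>n k. h k * g (n - k)" UNIV "\<lambda>_. UNIV"] F by simp
  then show ?thesis unfolding l1_def conv1_def by simp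
qed

lemma conv_delta: "conv1 delta1 a = a"
proof
  fix n
  have "conv1 delta1 a n = conv1 a delta1 n" by (simp add: conv1_comm)
  also have "\<dots> = (\<Sum>j\<in>{0}. a (n - j) * delta1 j)"
    by (rule conv1_fs) (auto simp: delta1_def)
  finally show "conv1 delta1 a n = a n" by (simp add: delta1_def)
qed

lemma fs_conv: assumes "fs a" "fs b" shows "fs (conv1 a b)"
proof -
  let ?A = "{n. a n \<noteq> 0}" and ?B = "{n. b n \<noteq> 0}"
  have fA: "finite ?A" and fB: "finite ?B" using assms unfolding fs_def by auto
  have "{n. conv1 a b n \<noteq> 0} \<subseteq> (\<lambda>(i,j). i + j) ` (?A \<times> ?B)"
  proof
    fix n assume "n \<in> {n. conv1 a b n \<noteq> 0}"
    then have c: "conv1 a b n \<noteq> 0" by simp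
    have "conv1 a b n = (\<Sum>j\<in>?B. a (n - j) * b j)"
      by (rule conv1_fs[OF fB]) simp
    with c have "(\<Sum>j\<in>?B. a (n - j) * b j) \<noteq> 0" by simp
    then obtain j where j: "j \<in> ?B" "a (n - j) * b j \<noteq> 0" by (meson sum.not_neutral_contains_not_neutral)
    then have "(n - j, j) \<in> ?A \<times> ?B" by simp
    then show "n \<in> (\<lambda>(i,j). i + j) ` (?A \<times> ?B)"
      by (rule rev_image_eqI) simp
  qed
  moreover have "finite ((\<lambda>(i,j). i + j) ` (?A \<times> ?B))"
    using fA fB by (intro finite_imageI finite_cartesian_product)
  ultimately show ?thesis unfolding fs_def by (rule finite_subset)
qed

lemma conv_assoc:
  assumes "l1 h" "l1 g" "fs a"
  shows "conv1 (conv1 h g) a = conv1 h (conv1 g a)"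
proof
  fix n
  let ?A = "{n. a n \<noteq> 0}"
  have fA: "finite ?A" using assms(3) unfolding fs_def by auto
  have "conv1 (conv1 h g) a n = (\<Sum>j\<in>?A. conv1 h g (n - j) * a j)"
    by (rule conv1_fs) (use fA in auto)
  also have "\<dots> = (\<Sum>j\<in>?A. infsum (\<lambda>k. h k * g (n - j - k) * a j) UNIV)"
    unfolding conv1_def by (intro sum.cong refl infsum_cmult_left[symmetric]) (use conv_summ[OF assms(1,2)] in auto)
  also have "\<dots> = infsum (\<lambda>k. \<Sum>j\<in>?A. h k * g (n - j - k) * a j) UNIV"
    by (rule infsum_sum_fin[THEN conjunct2, symmetric]) (use fA summable_on_cmult_left[OF conv_summ[OF assms(1,2)]] in auto)
  also have "\<dots> = infsum (\<lambda>k. h k * conv1 g a (n - k)) UNIV"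
  proof (rule infsum_cong)
    fix k
    have "conv1 g a (n - k) = (\<Sum>j\<in>?A. g (n - k - j) * a j)"
      by (rule conv1_fs) (use fA in auto)
    then show "(\<Sum>j\<in>?A. h k * g (n - j - k) * a j) = h k * conv1 g a (n - k)"
      by (simp add: sum_distrib_left mult.assoc algebra_simps)
  qed
  also have "\<dots> = conv1 h (conv1 g a) n" unfolding conv1_def ..
  finally show "conv1 (conv1 h g) a n = conv1 h (conv1 g a) n" .
qed

definition inv1 :: "sig1 \<Rightarrow> bool" where
  "inv1 a \<longleftrightarrow> fs a \<and> (\<exists>h. l1 h \<and> conv1 h a = delta1)"

lemma inv1_mult: assumes "inv1 a" "inv1 b" shows "inv1 (conv1 a b)"
proof -
  obtain h g where h: "l1 h" "conv1 h a = delta1" and g: "l1 g" "conv1 g b = delta1" and fa: "fs a" and fb: "fs b"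
    using assms unfolding inv1_def by auto
  have "conv1 (conv1 h g) (conv1 a b) = conv1 h (conv1 g (conv1 a b))"
    by (rule conv_assoc[OF h(1) g(1) fs_conv[OF fa fb]])
  also have "conv1 g (conv1 a b) = conv1 g (conv1 b a)" by (simp add: conv1_comm)
  also have "\<dots> = conv1 (conv1 g b) a" by (rule conv_assoc[symmetric, OF g(1) fs_l1[OF fb] fa])
  also have "\<dots> = a" by (simp add: g conv_delta)
  finally have "conv1 (conv1 h g) (conv1 a b) = delta1" using h by simp
  then show ?thesis unfolding inv1_def using fs_conv[OF fa fb] l1_conv[OF h(1) g(1)] by blast
qed

lemma inv1_delta: "inv1 delta1"
  unfolding inv1_def fs_def
  using conv_delta[of delta1] fs_l1[of delta1] unfolding fs_def delta1_def
  by (auto intro!: exI[of _ delta1] simp: delta1_def)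

lemma inv1_list: "(\<And>u. u \<in> set us \<Longrightarrow> inv1 u) \<Longrightarrow> inv1 (conv1_list us)"
  by (induction us) (auto simp: conv1_list_def inv1_delta inv1_mult)


lemma shift_summable:
  fixes f :: sig1
  assumes "f summable_on UNIV"
  shows "(\<lambda>n. f (n - j)) summable_on UNIV" and "infsum (\<lambda>n. f (n - j)) UNIV = infsum f UNIV"
proof -
  show "(\<lambda>n. f (n - j)) summable_on UNIV"
    using assms by (subst summable_on_reindex_bij_witness[where j="\<lambda>n. n - j" and i="\<lambda>m. m + j" and T=UNIV and h=f]) auto
  show "infsum (\<lambda>n. f (n - j)) UNIV = infsum f UNIV"
    by (rule infsum_reindex_bij_witness[where j="\<lambda>n. n - j" and i="\<lambda>m. m + j"]) auto
qed

lemma step_l1: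
  fixes x b :: sig1
  assumes fA: "finite A" and xs: "x summable_on UNIV"
  shows "(\<lambda>n. \<Sum>j\<in>A. b j * x (n - j)) summable_on UNIV"
    and "infsum (\<lambda>n. \<bar>\<Sum>j\<in>A. b j * x (n - j)\<bar>) UNIV \<le> (\<Sum>j\<in>A. \<bar>b j\<bar>) * infsum (\<lambda>n. \<bar>x n\<bar>) UNIV"
proof -
  have xa: "(\<lambda>n. \<bar>x n\<bar>) summable_on UNIV" using xs summable_on_iff_abs_summable_on_real by auto
  have sj: "(\<lambda>n. \<bar>b j\<bar> * \<bar>x (n - j)\<bar>) summable_on UNIV" for j
    using summable_on_cmult_right[OF shift_summable(1)[OF xa, of j]] by simp
  have ij: "infsum (\<lambda>n. \<bar>b j\<bar> * \<bar>x (n - j)\<bar>) UNIV = \<bar>b j\<bar> * infsum (\<lambda>n. \<bar>x n\<bar>) UNIV" for j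
    by (subst infsum_cmult_right) (use shift_summable[OF xa, of j] in auto)
  have z: "(\<lambda>n. \<Sum>j\<in>A. \<bar>b j\<bar> * \<bar>x (n - j)\<bar>) summable_on UNIV \<and>
      infsum (\<lambda>n. \<Sum>j\<in>A. \<bar>b j\<bar> * \<bar>x (n - j)\<bar>) UNIV = (\<Sum>j\<in>A. infsum (\<lambda>n. \<bar>b j\<bar> * \<bar>x (n - j)\<bar>) UNIV)"
    by (rule infsum_sum_fin[OF fA]) (use sj in auto)
  have le: "\<bar>\<Sum>j\<in>A. b j * x (n - j)\<bar> \<le> (\<Sum>j\<in>A. \<bar>b j\<bar> * \<bar>x (n - j)\<bar>)" for n
    by (rule order_trans[OF sum_abs]) (simp add: abs_mult)
  have ya: "(\<lambda>n. norm (\<Sum>j\<in>A. b j * x (n - j))) summable_on UNIV"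
    by (rule Infinite_Sum.abs_summable_on_comparison_test'[OF z[THEN conjunct1]]) (use le in auto)
  then show "(\<lambda>n. \<Sum>j\<in>A. b j * x (n - j)) summable_on UNIV"
    using summable_on_iff_abs_summable_on_real by blast
  have "infsum (\<lambda>n. \<bar>\<Sum>j\<in>A. b j * x (n - j)\<bar>) UNIV \<le> infsum (\<lambda>n. \<Sum>j\<in>A. \<bar>b j\<bar> * \<bar>x (n - j)\<bar>) UNIV"
    by (rule infsum_mono) (use ya z le in auto)
  also have "\<dots> = (\<Sum>j\<in>A. \<bar>b j\<bar>) * infsum (\<lambda>n. \<bar>x n\<bar>) UNIV"
    using z ij by (simp add: sum_distrib_right)
  finally show "infsum (\<lambda>n. \<bar>\<Sum>j\<in>A. b j * x (n - j)\<bar>) UNIV \<le> (\<Sum>j\<in>A. \<bar>b j\<bar>) * infsum (\<lambda>n. \<bar>x n\<bar>) UNIV" .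
qed

primrec npw :: "sig1 \<Rightarrow> int set \<Rightarrow> nat \<Rightarrow> sig1" where
  "npw b A 0 = delta1"
| "npw b A (Suc k) = (\<lambda>n. \<Sum>j\<in>A. b j * npw b A k (n - j))"

lemma npw_bound:
  assumes fA: "finite A" and r: "(\<Sum>j\<in>A. \<bar>b j\<bar>) \<le> r"
  shows "npw b A k summable_on UNIV \<and> infsum (\<lambda>n. \<bar>npw b A k n\<bar>) UNIV \<le> r ^ k"
proof (induction k)
  case 0
  have "npw b A 0 summable_on UNIV" by (rule summable_fin_supp[of "{0}"]) (auto simp: delta1_def)
  moreover have "infsum (\<lambda>n. \<bar>npw b A 0 n\<bar>) UNIV = (\<Sum>n\<in>{0}. \<bar>npw b A 0 n\<bar>)"
    by (rule infsum_fin_supp) (auto simp: delta1_def)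
  ultimately show ?case by (simp add: delta1_def)
next
  case (Suc k)
  then have s: "npw b A k summable_on UNIV" and i: "infsum (\<lambda>n. \<bar>npw b A k n\<bar>) UNIV \<le> r ^ k" by auto
  have i0: "0 \<le> infsum (\<lambda>n. \<bar>npw b A k n\<bar>) UNIV" by (rule infsum_nonneg) auto
  have "infsum (\<lambda>n. \<bar>npw b A (Suc k) n\<bar>) UNIV \<le> (\<Sum>j\<in>A. \<bar>b j\<bar>) * infsum (\<lambda>n. \<bar>npw b A k n\<bar>) UNIV"
    using step_l1(2)[OF fA s, of b] by simp
  also have "\<dots> \<le> r * r ^ k"
    by (rule mult_mono[OF r i]) (use i0 order_trans[OF sum_nonneg r] in auto)
  finally show ?case using step_l1(1)[OF fA s, of b] by simp
qed


lemma neumann: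
  fixes a :: sig1 and A :: "int set"
  assumes fA: "finite A" and A0: "0 \<in> A" and supp: "\<And>n. n \<notin> A \<Longrightarrow> a n = 0"
    and dom: "(\<Sum>n\<in>A-{0}. \<bar>a n\<bar>) < \<bar>a 0\<bar>"
  shows "\<exists>h. l1 h \<and> conv1 h a = delta1"
proof -
  define c where "c = a 0"
  have s0: "0 \<le> (\<Sum>n\<in>A-{0}. \<bar>a n\<bar>)" by (rule sum_nonneg) auto
  have cpos: "\<bar>c\<bar> > 0" using dom s0 unfolding c_def by linarith
  then have c0: "c \<noteq> 0" by auto
  define b where "b n = (if n = 0 then 0 else - a n / c)" for n
  define r where "r = (\<Sum>j\<in>A. \<bar>b j\<bar>)"
  have "r = (\<Sum>j\<in>A-{0}. \<bar>b j\<bar>) + \<bar>b 0\<bar>"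
    unfolding r_def using sum.remove[OF fA A0, of "\<lambda>j. \<bar>b j\<bar>"] by simp
  also have "\<dots> = (\<Sum>j\<in>A-{0}. \<bar>a j\<bar> / \<bar>c\<bar>)"
    by (simp add: b_def abs_divide)
  also have "\<dots> = (\<Sum>j\<in>A-{0}. \<bar>a j\<bar>) / \<bar>c\<bar>" by (simp add: sum_divide_distrib)
  finally have r_eq: "r = (\<Sum>j\<in>A-{0}. \<bar>a j\<bar>) / \<bar>c\<bar>" .
  have r1: "r < 1" using dom cpos unfolding r_eq c_def by (simp add: divide_less_eq)
  have r0: "0 \<le> r" unfolding r_def by (rule sum_nonneg) auto
  let ?p = "npw b A"
  have pb: "?p k summable_on UNIV \<and> infsum (\<lambda>n. \<bar>?p k n\<bar>) UNIV \<le> r ^ k" for k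
    by (rule npw_bound[OF fA]) (simp add: r_def)
  have pt: "\<bar>?p k n\<bar> \<le> r ^ k" for k n
    using l1_bound[of "?p k" n] pb[of k] unfolding l1_def by linarith
  have geo: "summable (\<lambda>k. r ^ k)" using r0 r1 by (simp add: summable_geometric)
  have sa: "summable (\<lambda>k. \<bar>?p k n\<bar>)" for n
    by (rule summable_comparison_test[OF _ geo]) (use pt in auto)
  have ss: "summable (\<lambda>k. ?p k n)" for n
    by (rule summable_comparison_test[OF _ geo]) (use pt in auto)
  define h where "h n = (\<Sum>k. ?p k n) / c" for n
  have hl1: "l1 h"
  proof -
    have "(\<lambda>n. \<bar>h n\<bar>) summable_on UNIV"
    proof (rule nonneg_bdd_above_summable_on)
      show "bdd_above (sum (\<lambda>n. \<bar>h n\<bar>) ` {F. F \<subseteq> UNIV \<and> finite F})"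
      proof (rule bdd_aboveI2)
        fix F :: "int set" assume "F \<in> {F. F \<subseteq> UNIV \<and> finite F}"
        then have fF: "finite F" by simp
        have "(\<Sum>n\<in>F. \<Sum>k. \<bar>?p k n\<bar>) = (\<Sum>k. \<Sum>n\<in>F. \<bar>?p k n\<bar>)"
          by (rule suminf_sum[symmetric]) (use sa in auto)
        also have "\<dots> \<le> (\<Sum>k. r ^ k)"
        proof (rule suminf_le)
          fix k
          have "(\<Sum>n\<in>F. \<bar>?p k n\<bar>) \<le> infsum (\<lambda>n. \<bar>?p k n\<bar>) UNIV"
          proof (rule finite_sum_le_infsum)
            show "(\<lambda>n. \<bar>?p k n\<bar>) summable_on UNIV"
              using pb[of k] summable_on_iff_abs_summable_on_real[of "?p k" UNIV] by simp
          qed (use fF in auto)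
          then show "(\<Sum>n\<in>F. \<bar>?p k n\<bar>) \<le> r ^ k" using pb[of k] by linarith
        next
          show "summable (\<lambda>k. \<Sum>n\<in>F. \<bar>?p k n\<bar>)" by (rule summable_sum) (use sa in auto)
        qed (rule geo)
        finally have B: "(\<Sum>n\<in>F. \<Sum>k. \<bar>?p k n\<bar>) \<le> (\<Sum>k. r ^ k)" .
        have A: "(\<Sum>n\<in>F. \<bar>\<Sum>k. ?p k n\<bar>) \<le> (\<Sum>n\<in>F. \<Sum>k. \<bar>?p k n\<bar>)"
          by (rule sum_mono) (rule summable_rabs[OF sa])
        have "(\<Sum>n\<in>F. \<bar>h n\<bar>) = (\<Sum>n\<in>F. \<bar>\<Sum>k. ?p k n\<bar>) / \<bar>c\<bar>"
          by (simp add: h_def abs_divide sum_divide_distrib)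
        also have "\<dots> \<le> (\<Sum>k. r ^ k) / \<bar>c\<bar>"
          by (rule divide_right_mono) (use A B in auto)
        finally show "(\<Sum>n\<in>F. \<bar>h n\<bar>) \<le> (\<Sum>k. r ^ k) / \<bar>c\<bar>" .
      qed
    qed auto
    then show ?thesis using summable_on_iff_abs_summable_on_real[of h UNIV] by (simp add: l1_def)
  qed
  have aeq: "a j = c * delta1 j - c * b j" for j
    using c0 by (auto simp: delta1_def b_def c_def)
  have "conv1 h a n = delta1 n" for n
  proof -
    have "conv1 h a n = (\<Sum>j\<in>A. h (n - j) * a j)" by (rule conv1_fs[OF fA supp])
    also have "\<dots> = (\<Sum>j\<in>A. h (n - j) * (c * delta1 j)) - (\<Sum>j\<in>A. h (n - j) * (c * b j))"
      by (simp add: aeq right_diff_distrib sum_subtractf)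
    also have "(\<Sum>j\<in>A. h (n - j) * (c * delta1 j)) = h n * c"
    proof -
      have "(\<Sum>j\<in>A. h (n - j) * (c * delta1 j)) = (\<Sum>j\<in>A. if j = 0 then h n * c else 0)"
        by (rule sum.cong) (auto simp: delta1_def)
      also have "\<dots> = h n * c" using A0 fA by (simp add: sum.delta)
      finally show ?thesis .
    qed
    also have "h n * c = (\<Sum>k. ?p k n)" using c0 by (simp add: h_def)
    also have "(\<Sum>j\<in>A. h (n - j) * (c * b j)) = (\<Sum>j\<in>A. \<Sum>k. b j * ?p k (n - j))"
      using c0 by (intro sum.cong refl) (simp add: h_def suminf_mult[OF ss])
    also have "\<dots> = (\<Sum>k. \<Sum>j\<in>A. b j * ?p k (n - j))"
      by (rule suminf_sum[symmetric]) (use ss summable_mult in auto)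
    also have "\<dots> = (\<Sum>k. ?p (Suc k) n)" by simp
    also have "\<dots> = (\<Sum>k. ?p k n) - ?p 0 n" by (rule suminf_split_head[OF ss])
    finally show ?thesis by simp
  qed
  then show ?thesis using hl1 by blast
qed


lemma inv_at:
  fixes a :: sig1
  assumes fA: "finite A" and mA: "m \<in> A" and supp: "\<And>n. n \<notin> A \<Longrightarrow> a n = 0"
    and dom: "(\<Sum>n\<in>A-{m}. \<bar>a n\<bar>) < \<bar>a m\<bar>"
  shows "\<exists>h. l1 h \<and> conv1 h a = delta1"
proof -
  define a' where "a' n = a (n + m)" for n
  define A' where "A' = (\<lambda>n. n - m) ` A"
  have "(\<Sum>n\<in>A'-{0}. \<bar>a' n\<bar>) = (\<Sum>n\<in>A-{m}. \<bar>a n\<bar>)"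
    by (rule sum.reindex_bij_witness[where i="\<lambda>n. n - m" and j="\<lambda>n. n + m"]) (auto simp: A'_def a'_def)
  then have dom': "(\<Sum>n\<in>A'-{0}. \<bar>a' n\<bar>) < \<bar>a' 0\<bar>" using dom by (simp add: a'_def)
  have supp': "a' n = 0" if "n \<notin> A'" for n
  proof -
    have "n + m \<notin> A" using that unfolding A'_def by (metis add_diff_cancel image_eqI)
    then show ?thesis using supp by (simp add: a'_def)
  qed
  obtain h' where h': "l1 h'" "conv1 h' a' = delta1"
    using neumann[of A' a'] fA mA supp' dom' unfolding A'_def by auto
  define h where "h n = h' (n + m)" for n
  have "l1 h" using shift_summable(1)[of h' "-m"] h'(1) unfolding l1_def h_def by simp
  moreover have "conv1 h a = delta1"
  proof
    fix n
    have "conv1 h a n = conv1 h' a' n"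
      unfolding conv1_def
      by (rule infsum_reindex_bij_witness[where j="\<lambda>k. k + m" and i="\<lambda>k. k - m"]) (auto simp: h_def a'_def algebra_simps)
    then show "conv1 h a n = delta1 n" using h'(2) by simp
  qed
  ultimately show ?thesis by blast
qed

lemma abs_add_same_sign: "0 \<le> (p::real) * q \<Longrightarrow> \<bar>p + q\<bar> = \<bar>p\<bar> + \<bar>q\<bar>"
  by (auto simp: zero_le_mult_iff)

lemma len3_inv:
  assumes l: "len3 u" and cond: "\<bar>u (-1) + u 1\<bar> < u 0"
  shows "inv1 u"
proof -
  define p c q where "p = u (-1)" and "c = u 0" and "q = u 1"
  have supp: "u n = 0" if "n \<notin> {-1,0,1}" for n using l that unfolding len3_def by auto
  have fsu: "fs u" unfolding fs_def
    by (rule finite_subset[of _ "{-1,0,1}"]) (use supp in auto)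
  show ?thesis
  proof (cases "\<bar>p\<bar> + \<bar>q\<bar> < c")
    case True
    have "\<exists>h. l1 h \<and> conv1 h u = delta1"
    proof (rule inv_at[of "{-1,0,1}" 0])
      show "(\<Sum>n\<in>{-1,0,1}-{0}. \<bar>u n\<bar>) < \<bar>u 0\<bar>"
      proof -
        have e: "{-1,0,1::int}-{0} = {-1,1}" by auto
        show ?thesis using True unfolding e by (simp add: p_def q_def c_def)
      qed
    qed (use supp in auto)
    then show ?thesis using fsu unfolding inv1_def by blast
  next
    case False
    have cp: "\<bar>p + q\<bar> < c" using cond by (simp add: p_def q_def c_def)
    have pq: "p * q < 0"
    proof (rule ccontr)
      assume "\<not> p * q < 0"
      then have "\<bar>p + q\<bar> = \<bar>p\<bar> + \<bar>q\<bar>" by (intro abs_add_same_sign) simp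
      then show False using False cp by linarith
    qed
    then have p0: "p \<noteq> 0" by auto
    define s where "s = sqrt (c^2 - 4*p*q)"
    have D: "c^2 - 4*p*q > 0"
    proof -
      have "4*p*q = 4*(p*q)" by simp
      then show ?thesis using pq zero_le_power2[of c] by linarith
    qed
    have s2: "s^2 = c^2 - 4*p*q" unfolding s_def using D by simp
    define \<beta> where "\<beta> = (c + s) / (2*p)"
    have b2: "2*p*\<beta> = c + s" unfolding \<beta>_def using p0 by simp
    have "4*p*(p*\<beta>^2 - c*\<beta> + q) = (2*p*\<beta>)^2 - 2*c*(2*p*\<beta>) + 4*p*q"
      by (simp add: algebra_simps power2_eq_square)
    also have "\<dots> = 0" unfolding b2 using s2 by (simp add: algebra_simps power2_eq_square)
    finally have root: "p*\<beta>^2 - c*\<beta> + q = 0" using p0 by simp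
    define d where "d = c - \<beta> * p"
    have qd: "q = \<beta> * d" using root unfolding d_def by (simp add: algebra_simps power2_eq_square)
    have b1: "\<bar>\<beta>\<bar> \<noteq> 1"
    proof
      assume "\<bar>\<beta>\<bar> = 1"
      then have "\<beta> = 1 \<or> \<beta> = -1" by auto
      then show False using root cp by auto
    qed
    have dp: "\<bar>d\<bar> \<noteq> \<bar>p\<bar>"
    proof
      assume "\<bar>d\<bar> = \<bar>p\<bar>"
      then have "d = p \<or> d = -p" by auto
      then show False
      proof
        assume dd: "d = p"
        have c1: "c = p + \<beta> * p" using dd d_def by linarith
        have "q = \<beta> * p" using qd dd by simp
        then have "c = p + q" using c1 by linarith
        then show False using cp by simp
      next
        assume dd: "d = -p"
        have c1: "c = \<beta> * p - p" using dd d_def by linarith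
        have "q = - (\<beta> * p)" using qd dd by simp
        then have "c = - (p + q)" using c1 by linarith
        then show False using cp by simp
      qed
    qed
    define u1 where "u1 n = (if n = 0 then 1 else if n = 1 then \<beta> else 0)" for n :: int
    define v1 where "v1 n = (if n = -1 then p else if n = 0 then d else 0)" for n :: int
    have u1s: "u1 n = 0" if "n \<notin> {0,1}" for n using that unfolding u1_def by auto
    have v1s: "v1 n = 0" if "n \<notin> {-1,0}" for n using that unfolding v1_def by auto
    have fs1: "fs u1" unfolding fs_def by (rule finite_subset[of _ "{0,1}"]) (use u1s in auto)
    have fs2: "fs v1" unfolding fs_def by (rule finite_subset[of _ "{-1,0}"]) (use v1s in auto)
    have i1: "inv1 u1"
    proof -
      have "\<exists>h. l1 h \<and> conv1 h u1 = delta1"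
      proof (cases "\<bar>\<beta>\<bar> < 1")
        case True
        show ?thesis
        proof (rule inv_at[of "{0,1}" 0])
          show "(\<Sum>n\<in>{0,1}-{0}. \<bar>u1 n\<bar>) < \<bar>u1 0\<bar>" using True by (simp add: u1_def insert_Diff_if)
        qed (use u1s in auto)
      next
        case False
        then have "1 < \<bar>\<beta>\<bar>" using b1 by auto
        then show ?thesis
        proof (intro inv_at[of "{0,1}" 1])
          show "(\<Sum>n\<in>{0,1}-{1}. \<bar>u1 n\<bar>) < \<bar>u1 1\<bar>" using \<open>1 < \<bar>\<beta>\<bar>\<close> by (simp add: u1_def insert_Diff_if)
        qed (use u1s in auto)
      qed
      then show ?thesis using fs1 unfolding inv1_def by blast
    qed
    have i2: "inv1 v1"
    proof -
      have "\<exists>h. l1 h \<and> conv1 h v1 = delta1"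
      proof (cases "\<bar>p\<bar> < \<bar>d\<bar>")
        case True
        show ?thesis
        proof (rule inv_at[of "{-1,0}" 0])
          show "(\<Sum>n\<in>{-1,0}-{0}. \<bar>v1 n\<bar>) < \<bar>v1 0\<bar>" using True by (simp add: v1_def insert_Diff_if)
        qed (use v1s in auto)
      next
        case False
        then have "\<bar>d\<bar> < \<bar>p\<bar>" using dp by auto
        show ?thesis
        proof (rule inv_at[of "{-1,0}" "-1"])
          show "(\<Sum>n\<in>{-1,0}-{-1}. \<bar>v1 n\<bar>) < \<bar>v1 (-1)\<bar>" using \<open>\<bar>d\<bar> < \<bar>p\<bar>\<close> by (simp add: v1_def insert_Diff_if)
        qed (use v1s in auto)
      qed
      then show ?thesis using fs2 unfolding inv1_def by blast
    qed
    have "conv1 u1 v1 = u"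
    proof
      fix n
      have "conv1 u1 v1 n = (\<Sum>j\<in>{-1,0}. u1 (n - j) * v1 j)"
        by (rule conv1_fs) (use v1s in auto)
      also have "\<dots> = u1 (n + 1) * p + u1 n * d" by (simp add: v1_def insert_Diff_if)
      also have "\<dots> = u n"
      proof -
        consider "n = -1" | "n = 0" | "n = 1" | "n \<notin> {-1,0,1}" by auto
        then show ?thesis
        proof cases
          case 1 then show ?thesis by (simp add: u1_def p_def)
        next
          case 2 then show ?thesis by (simp add: u1_def c_def d_def algebra_simps)
        next
          case 3 then show ?thesis using qd by (simp add: u1_def q_def)
        next
          case 4 then show ?thesis using supp[OF 4] by (auto simp: u1_def)
        qed
      qed
      finally show "conv1 u1 v1 n = u n" .
    qed
    then show ?thesis using inv1_mult[OF i1 i2] by simp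
  qed
qed


lemma tensor_split: "tensor h1 h2 = (\<lambda>(x,y). h1 x * h2 y)"
  by (rule ext) (auto simp: tensor_def)

lemma l1_tensor: assumes "l1 h1" "l1 h2" shows "tensor h1 h2 summable_on UNIV"
  using prod_summable(1)[of h1 UNIV h2 UNIV] assms unfolding l1_def tensor_split by simp

lemma tensor_inv:
  assumes "l1 h1" "l1 h2" "fs a1" "fs a2" "conv1 h1 a1 = delta1" "conv1 h2 a2 = delta1"
  shows "conv2 (tensor h1 h2) (tensor a1 a2) = delta2"
proof
  fix p :: "int \<times> int"
  obtain p1 p2 where p: "p = (p1, p2)" by (cases p)
  have s1: "(\<lambda>k. h1 k * a1 (p1 - k)) summable_on UNIV" by (rule conv_summ[OF assms(1) fs_l1[OF assms(3)]])
  have s2: "(\<lambda>k. h2 k * a2 (p2 - k)) summable_on UNIV" by (rule conv_summ[OF assms(2) fs_l1[OF assms(4)]])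
  have "conv2 (tensor h1 h2) (tensor a1 a2) p
      = infsum (\<lambda>(k1,k2). (h1 k1 * a1 (p1 - k1)) * (h2 k2 * a2 (p2 - k2))) (UNIV \<times> UNIV)"
    unfolding conv2_def p
    by (simp add: tensor_def shift2_def case_prod_beta' algebra_simps)
  also have "\<dots> = conv1 h1 a1 p1 * conv1 h2 a2 p2"
    using prod_summable(2)[OF s1 s2] unfolding conv1_def by simp
  finally show "conv2 (tensor h1 h2) (tensor a1 a2) p = delta2 p"
    using assms(5,6) by (simp add: p delta1_def delta2_def)
qed

lemma conv2_bound:
  assumes fw: "finite_support2 w" and xb: "\<And>p. \<bar>x p\<bar> \<le> B"
  shows "\<bar>conv2 w x p\<bar> \<le> B * infsum (\<lambda>k. \<bar>w k\<bar>) UNIV"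
proof -
  have ws: "w summable_on UNIV"
    using fw unfolding finite_support2_def by (intro summable_fin_supp[of "{p. w p \<noteq> 0}"]) auto
  show ?thesis unfolding conv2_def
    by (rule mult_bounded(2)[OF ws]) (use xb in auto)
qed

theorem theorem3:
  fixes S T Q :: nat
    and W :: "nat \<Rightarrow> nat \<Rightarrow> sig2"
    and f g :: "nat \<Rightarrow> nat \<Rightarrow> sig1"
  assumes "S \<ge> 1" and "T \<ge> 1" and "Q \<ge> 1"
    and "\<forall>t\<in>{1..T}. \<forall>s\<in>{1..S}. finite_support2 (W t s)"
    and "\<forall>q\<in>{1..Q}. \<forall>t\<in>{1..T}. len3 (f q t) \<and> len3 (g q t)"
    and "\<forall>q\<in>{1..Q}. \<forall>t\<in>{1..T}.
           \<bar>f q t (-1) + f q t 1\<bar> < f q t 0 \<and> \<bar>g q t (-1) + g q t 1\<bar> < g q t 0"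
  shows "ARMA_stable S T Q W f g"
proof -
  define F where "F t = conv1_list (map (\<lambda>q. f q t) [1..<Q+1])" for t
  define G where "G t = conv1_list (map (\<lambda>q. g q t) [1..<Q+1])" for t
  have iF: "inv1 (F t)" and iG: "inv1 (G t)" if t: "t \<in> {1..T}" for t
  proof -
    show "inv1 (F t)" unfolding F_def
    proof (rule inv1_list)
      fix u assume "u \<in> set (map (\<lambda>q. f q t) [1..<Q+1])"
      then obtain q where q0: "q \<in> set [1..<Q+1]" "u = f q t" by auto
      then have q: "q \<in> {1..Q}" "u = f q t" by auto
      then show "inv1 u" using assms(5,6) t by (auto intro!: len3_inv)
    qed
    show "inv1 (G t)" unfolding G_def
    proof (rule inv1_list)
      fix u assume "u \<in> set (map (\<lambda>q. g q t) [1..<Q+1])"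
      then obtain q where q0: "q \<in> set [1..<Q+1]" "u = g q t" by auto
      then have q: "q \<in> {1..Q}" "u = g q t" by auto
      then show "inv1 u" using assms(5,6) t by (auto intro!: len3_inv)
    qed
  qed
  define hF where "hF t = (SOME h. l1 h \<and> conv1 h (F t) = delta1)" for t
  define hG where "hG t = (SOME h. l1 h \<and> conv1 h (G t) = delta1)" for t
  have hF: "l1 (hF t) \<and> conv1 (hF t) (F t) = delta1" if "t \<in> {1..T}" for t
  proof -
    have "\<exists>h. l1 h \<and> conv1 h (F t) = delta1" using iF[OF that] by (simp add: inv1_def)
    from someI_ex[OF this] show ?thesis unfolding hF_def .
  qed
  have hG: "l1 (hG t) \<and> conv1 (hG t) (G t) = delta1" if "t \<in> {1..T}" for t
  proof -
    have "\<exists>h. l1 h \<and> conv1 h (G t) = delta1" using iG[OF that] by (simp add: inv1_def)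
    from someI_ex[OF this] show ?thesis unfolding hG_def .
  qed
  define H where "H t = tensor (hF t) (hG t)" for t
  have Hinv: "conv2 (H t) (AR_filter Q f g t) = delta2" if t: "t \<in> {1..T}" for t
    unfolding H_def AR_filter_def F_def[symmetric] G_def[symmetric]
    using tensor_inv[of "hF t" "hG t" "F t" "G t"] hF[OF t] hG[OF t] iF[OF t] iG[OF t]
    by (auto simp: inv1_def)
  have Hs: "H t summable_on UNIV" if t: "t \<in> {1..T}" for t
    unfolding H_def using l1_tensor hF[OF t] hG[OF t] by blast
  have main: "(\<forall>p. (\<lambda>k. H t k * MA_part S W X t (shift2 p k)) summable_on UNIV) \<and>
              bounded_sig2 (conv2 (H t) (MA_part S W X t))"
    if Xb: "\<forall>s\<in>{1..S}. bounded_sig2 (X s)" and t: "t \<in> {1..T}" for X t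
  proof -
    obtain B where B: "\<forall>s\<in>{1..S}. \<forall>p. \<bar>X s p\<bar> \<le> B s"
      using Xb unfolding bounded_sig2_def by metis
    define M where "M = (\<Sum>s=1..S. B s * infsum (\<lambda>k. \<bar>W t s k\<bar>) UNIV)"
    have Zb: "\<bar>MA_part S W X t p\<bar> \<le> M" for p
    proof -
      have "\<bar>MA_part S W X t p\<bar> \<le> (\<Sum>s=1..S. \<bar>conv2 (W t s) (X s) p\<bar>)"
        unfolding MA_part_def by (rule sum_abs)
      also have "\<dots> \<le> M" unfolding M_def
      proof (rule sum_mono)
        fix s assume s: "s \<in> {1..S}"
        show "\<bar>conv2 (W t s) (X s) p\<bar> \<le> B s * infsum (\<lambda>k. \<bar>W t s k\<bar>) UNIV"
          by (rule conv2_bound) (use assms(4) t s B in auto)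
      qed
      finally show ?thesis .
    qed
    have "(\<lambda>k. H t k * MA_part S W X t (shift2 p k)) summable_on UNIV" for p
      by (rule mult_bounded(1)[OF Hs[OF t], of _ M]) (use Zb in auto)
    moreover have "bounded_sig2 (conv2 (H t) (MA_part S W X t))"
      unfolding bounded_sig2_def
    proof (intro exI allI)
      fix p
      show "\<bar>conv2 (H t) (MA_part S W X t) p\<bar> \<le> M * infsum (\<lambda>k. \<bar>H t k\<bar>) UNIV"
        unfolding conv2_def by (rule mult_bounded(2)[OF Hs[OF t]]) (use Zb in auto)
    qed
    ultimately show ?thesis by blast
  qed
  show ?thesis unfolding ARMA_stable_def
    using Hinv main by blast
qed

end
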